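(* Let $\chi$ be a regular cardinal with $\chi>\aleph_0$. (1) If an ordinal $\eta>\chi$ is weakly reflective for $\chi$ and $\zeta>\eta$, then $\zeta$ is weakly reflective for $\chi$. (2) For an ordinal $\eta>\chi$: $\eta$ has the strong non-reflection property for $\chi$ iff there is $h:\eta\to\chi$ such that for every $\delta\in S^\eta_\chi$ there is a club $C$ of $\delta$ with $h\restriction C$ one-to-one; moreover the same function $h$ can witness both sides. (3) If there is some ordinal $\eta>\chi$ which is weakly reflective for $\chi$, then the least such ordinal, denoted $\theta^\ast(\chi)$, is a regular cardinal $>\chi$. Consequently an ordinal $\zeta$ is weakly reflective for $\chi$ iff there is a regular cardinal $\theta\le\zeta$ which is weakly reflective for $\chi$. (4) Suppose $\theta^\ast(\chi)$ is defined, and $\eta=\theta^\ast(\chi)$, or $\eta$ is an ordinal of cofinality $\ge\theta^\ast(\chi)$ such that $S^\eta_{\theta^\ast(\chi)}$ is stationary in $\eta$. Then for every function $h:\eta\to\chi$ the set $\mathrm{ref}(h)$ is stationary in $\eta$.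
   Context: $S^\eta_\chi=\{\delta<\eta:\mathrm{cf}(\delta)=\chi\}$. For a regular cardinal $\chi>\aleph_0$ and ordinal $\eta>\chi$: $\eta$ has the strong non-reflection property for $\chi$ if there is $h:\eta\to\chi$ such that for every $\delta\in S^\eta_\chi$ there is a club $C$ of $\delta$ with $h\restriction C$ strictly increasing; otherwise $\eta$ is weakly reflective for $\chi$. For $h:\eta\to\chi$, $\mathrm{ref}(h)=\{\delta\in S^\eta_\chi: h\restriction C$ is not strictly increasing for any club $C$ of $\delta\}$. *)

theory Defs
  imports Main "HOL-Library.Countable_Set"
begin

text \<open>Ordinals are modelled as elements of an arbitrary well-ordered type 'a; the
element x stands for the ordinal that is the order type of the initial segment {..<x}.
Since the type variable is universally quantified, this covers all ordinals.\<close>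

definition is_limit :: "'a::wellorder \<Rightarrow> bool" where
  "is_limit d \<longleftrightarrow> (\<exists>b. b < d) \<and> (\<forall>b<d. \<exists>g. b < g \<and> g < d)"

definition cof :: "'a::wellorder \<Rightarrow> 'a" where
  "cof d = (LEAST a. \<exists>f. f ` {..<a} \<subseteq> {..<d} \<and> (\<forall>b<d. \<exists>g<a. b \<le> f g))"

definition S_cof :: "'a::wellorder \<Rightarrow> 'a \<Rightarrow> 'a set" where
  "S_cof eta chi = {d. d < eta \<and> cof d = chi}"

definition club_in :: "'a::wellorder set \<Rightarrow> 'a \<Rightarrow> bool" where
  "club_in C d \<longleftrightarrow> C \<subseteq> {..<d} \<and> (\<forall>b<d. \<exists>g\<in>C. b \<le> g) \<and>
     (\<forall>g<d. is_limit g \<and> (\<forall>b<g. \<exists>x\<in>C. b \<le> x \<and> x < g) \<longrightarrow> g \<in> C)"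

definition stationary_in :: "'a::wellorder set \<Rightarrow> 'a \<Rightarrow> bool" where
  "stationary_in S d \<longleftrightarrow> S \<subseteq> {..<d} \<and> (\<forall>C. club_in C d \<longrightarrow> S \<inter> C \<noteq> {})"

definition is_cardinal :: "'a::wellorder \<Rightarrow> bool" where
  "is_cardinal a \<longleftrightarrow> (\<forall>b<a. \<not> (\<exists>f. bij_betw f {..<b} {..<a}))"

definition regular_cardinal :: "'a::wellorder \<Rightarrow> bool" where
  "regular_cardinal a \<longleftrightarrow> is_cardinal a \<and> infinite {..<a} \<and> cof a = a"

definition maps_into :: "('a::wellorder \<Rightarrow> 'a) \<Rightarrow> 'a \<Rightarrow> 'a \<Rightarrow> bool" where
  "maps_into h eta chi \<longleftrightarrow> h ` {..<eta} \<subseteq> {..<chi}"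

definition strong_nonrefl :: "'a::wellorder \<Rightarrow> 'a \<Rightarrow> bool" where
  "strong_nonrefl eta chi \<longleftrightarrow> chi < eta \<and>
     (\<exists>h. maps_into h eta chi \<and>
        (\<forall>d\<in>S_cof eta chi. \<exists>C. club_in C d \<and> strict_mono_on C h))"

definition weakly_reflective :: "'a::wellorder \<Rightarrow> 'a \<Rightarrow> bool" where
  "weakly_reflective eta chi \<longleftrightarrow> chi < eta \<and> \<not> strong_nonrefl eta chi"

definition refl_set :: "('a::wellorder \<Rightarrow> 'a) \<Rightarrow> 'a \<Rightarrow> 'a \<Rightarrow> 'a set" where
  "refl_set h eta chi =
     {d\<in>S_cof eta chi. \<not> (\<exists>C. club_in C d \<and> strict_mono_on C h)}"

definition theta_star :: "'a::wellorder \<Rightarrow> 'a" where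
  "theta_star chi = (LEAST eta. weakly_reflective eta chi)"

end

theory Submission
  imports Defs "HOL-Library.Equipollence"
begin

lemma cof_le:
  assumes "f ` {..<a} \<subseteq> {..<d}" "\<forall>b<d. \<exists>g<a. b \<le> f g"
  shows "cof d \<le> a"
  unfolding cof_def by (rule Least_le) (use assms in blast)

lemma cof_ex:
  "\<exists>f. f ` {..<cof d} \<subseteq> {..<d} \<and> (\<forall>b<d. \<exists>g<cof d. b \<le> f g)"
  unfolding cof_def by (rule LeastI[of _ d]) (rule exI[of _ id], auto)

lemma cof_le_self: "cof d \<le> d"
  by (rule cof_le[of id]) auto

lemma small_bounded:
  assumes "i < cof d" "A \<subseteq> f ` {..<i}" "A \<subseteq> {..<d}"
  shows "\<exists>b<d. \<forall>a\<in>A. a < b"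
proof (rule ccontr)
  assume na: "\<not> ?thesis"
  have id: "i < d" using assms(1) cof_le_self[of d] by simp
  define f' where "f' g = (if f g \<in> A then f g else i)" for g
  have "f' ` {..<i} \<subseteq> {..<d}" using assms(3) id by (auto simp: f'_def)
  moreover have "\<forall>b<d. \<exists>g<i. b \<le> f' g"
  proof (intro allI impI)
    fix b assume "b < d"
    then obtain a where "a \<in> A" "b \<le> a" using na by (meson not_less)
    then obtain g where "g < i" "a = f g" using assms(2) by auto
    then show "\<exists>g<i. b \<le> f' g" using \<open>a \<in> A\<close> \<open>b \<le> a\<close> by (auto simp: f'_def)
  qed
  ultimately have "cof d \<le> i" by (rule cof_le)
  then show False using assms(1) by simp
qed

lemma small_bounded_inj:
  assumes "i < cof d" "inj_on g A" "g ` A \<subseteq> {..<i}" "A \<subseteq> {..<d}"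
  shows "\<exists>b<d. \<forall>a\<in>A. a < b"
proof -
  have "A \<subseteq> (inv_into A g) ` {..<i}"
  proof
    fix a assume "a \<in> A"
    then have "a = inv_into A g (g a)" using assms(2) by simp
    then show "a \<in> (inv_into A g) ` {..<i}" using assms(3) \<open>a \<in> A\<close> by blast
  qed
  then show ?thesis using small_bounded[OF assms(1) _ assms(4)] by blast
qed

definition om :: "'a::wellorder" where "om = (LEAST w. infinite {..<w})"

lemma om_props:
  fixes chi :: "'a::wellorder"
  assumes "uncountable {..<chi}"
  shows "infinite {..<(om::'a)}" "countable {..<(om::'a)}" "(om::'a) < chi"
proof -
  have inf: "infinite {..<chi}" using assms countable_finite by blast
  show i: "infinite {..<(om::'a)}" unfolding om_def by (rule LeastI[of _ chi]) (rule inf)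
  have fin: "finite {..<x}" if "x < (om::'a)" for x
    using not_less_Least[OF that[unfolded om_def]] by blast
  have "inj_on (\<lambda>x. card {..<x}) {..<(om::'a)}"
  proof (rule inj_onI)
    fix u v assume xy: "u \<in> {..<(om::'a)}" "v \<in> {..<(om::'a)}" "card {..<u} = card {..<v}"
    show "u = v"
    proof (rule ccontr)
      assume "u \<noteq> v"
      then consider "u < v" | "v < u" by (meson linorder_neqE)
      then show False
      proof cases
        case 1
        have "{..<u} \<subset> {..<v}" using 1 by auto
        then have "card {..<u} < card {..<v}" using fin xy(2) by (intro psubset_card_mono) auto
        then show False using xy(3) by simp
      next
        case 2
        have "{..<v} \<subset> {..<u}" using 2 by auto
        then have "card {..<v} < card {..<u}" using fin xy(1) by (intro psubset_card_mono) auto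
        then show False using xy(3) by simp
      qed
    qed
  qed
  then show c: "countable {..<(om::'a)}" by (rule countableI)
  have "om \<le> chi" unfolding om_def by (rule Least_le) (rule inf)
  moreover have "om \<noteq> chi" using c assms by auto
  ultimately show "om < chi" by simp
qed

lemma om_seq:
  fixes x :: "nat \<Rightarrow> 'b"
  assumes "uncountable {..<(chi::'a::wellorder)}"
  shows "\<exists>f. range x \<subseteq> f ` {..<(om::'a)}"
proof -
  obtain e where e: "bij_betw e {..<(om::'a)} (UNIV::nat set)"
    using om_props[OF assms] countableE_infinite by metis
  have "range x \<subseteq> (x \<circ> e) ` {..<om}"
  proof
    fix y assume "y \<in> range x"
    then obtain n where n: "y = x n" by blast
    obtain w where "w \<in> {..<om}" "e w = n" using e unfolding bij_betw_def by (metis UNIV_I imageE)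
    then show "y \<in> (x \<circ> e) ` {..<om}" using n by force
  qed
  then show ?thesis by blast
qed

lemma omega_sup:
  fixes x :: "nat \<Rightarrow> 'a::wellorder"
  assumes unc: "uncountable {..<(chi::'a)}" and oc: "(om::'a) < cof d"
    and xd: "\<forall>n. x n < d" and inc: "\<forall>n. x n < x (Suc n)"
  shows "\<exists>s<d. (\<forall>n. x n < s) \<and> is_limit s \<and> (\<forall>b<s. \<exists>n. b < x n)"
proof -
  obtain f where f: "range x \<subseteq> f ` {..<(om::'a)}" using om_seq[OF unc, of x] by (elim exE)
  have rd: "range x \<subseteq> {..<d}" using xd by auto
  obtain b where b: "b < d" "\<forall>a\<in>range x. a < b"
    using small_bounded[OF oc f rd] by (elim exE conjE)
  define s where "s = (LEAST y. \<forall>n. x n < y)"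
  have bb: "\<forall>n. x n < b" using b(2) by simp
  have s1: "\<forall>n. x n < s" unfolding s_def by (rule LeastI[of _ b]) (rule bb)
  have "s \<le> b" unfolding s_def by (rule Least_le) (rule bb)
  then have sd: "s < d" using b by simp
  have s2: "\<exists>n. c < x n" if "c < s" for c
  proof (rule ccontr)
    assume "\<not> (\<exists>n. c < x n)"
    then have "\<forall>n. x n \<le> c" by (simp add: not_less)
    then have "\<forall>n. x n < c" using inc less_le_trans by blast
    then have "s \<le> c" unfolding s_def by (rule Least_le)
    then show False using that by simp
  qed
  have "is_limit s"
    unfolding is_limit_def
  proof
    show "\<exists>b. b < s" using s1 by blast
    show "\<forall>b<s. \<exists>g>b. g < s"
    proof (intro allI impI)
      fix c assume "c < s"
      then obtain n where "c < x n" using s2 by blast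
      then show "\<exists>g>c. g < s" using s1 by blast
    qed
  qed
  then show ?thesis using sd s1 s2 by blast
qed

lemma om_nonempty:
  assumes "uncountable {..<(chi::'a::wellorder)}"
  shows "\<exists>g. g < (om::'a)"
  using om_props(1)[OF assms] by (metis finite.emptyI lessThan_iff subsetI subset_empty)

lemma limit_of_om:
  assumes unc: "uncountable {..<(chi::'a::wellorder)}" and oc: "(om::'a) < cof d"
  shows "is_limit d"
  unfolding is_limit_def
proof
  obtain g where g: "g < (om::'a)" using om_nonempty[OF unc] by blast
  have od: "om \<le> d" using oc cof_le_self[of d] by simp
  show "\<exists>b. b < d" using g od by (meson less_le_trans)
  show "\<forall>b<d. \<exists>g>b. g < d"
  proof (rule ccontr)
    assume "\<not> (\<forall>b<d. \<exists>g>b. g < d)"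
    then obtain b where b: "b < d" "\<forall>g. b < g \<longrightarrow> \<not> g < d" by blast
    have "cof d \<le> om"
    proof (rule cof_le[of "\<lambda>_. b"])
      show "(\<lambda>_. b) ` {..<om} \<subseteq> {..<d}" using b by auto
      show "\<forall>ba<d. \<exists>ga<(om::'a). ba \<le> b"
      proof (intro allI impI)
        fix ba assume "ba < d"
        then have "ba \<le> b" using b(2) not_le by blast
        then show "\<exists>ga<(om::'a). ba \<le> b" using g by blast
      qed
    qed
    then show False using oc by simp
  qed
qed

definition acc_pt :: "'a::wellorder set \<Rightarrow> 'a \<Rightarrow> bool" where
  "acc_pt E g \<longleftrightarrow> is_limit g \<and> (\<forall>b<g. \<exists>x\<in>E. b \<le> x \<and> x < g)"

lemma club_closed: "club_in C d \<Longrightarrow> g < d \<Longrightarrow> acc_pt C g \<Longrightarrow> g \<in> C"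
  unfolding club_in_def acc_pt_def by blast

lemma club_unb: "club_in C d \<Longrightarrow> b < d \<Longrightarrow> \<exists>g\<in>C. b \<le> g"
  unfolding club_in_def by blast

lemma club_sub: "club_in C d \<Longrightarrow> C \<subseteq> {..<d}"
  unfolding club_in_def by blast

lemma club_intro:
  assumes "C \<subseteq> {..<d}" "\<And>b. b < d \<Longrightarrow> \<exists>g\<in>C. b \<le> g"
    "\<And>g. g < d \<Longrightarrow> acc_pt C g \<Longrightarrow> g \<in> C"
  shows "club_in C d"
  using assms unfolding club_in_def acc_pt_def by blast

lemma club_univ: "is_limit d \<Longrightarrow> club_in {..<d} d"
  by (rule club_intro) auto

lemma limit_above: "is_limit d \<Longrightarrow> b < d \<Longrightarrow> \<exists>g. b < g \<and> g < d"
  unfolding is_limit_def by blast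

lemma club_unb_strict:
  assumes "club_in C d" "is_limit d" "b < d" shows "\<exists>g\<in>C. b < g"
proof -
  obtain g' where "b < g'" "g' < d" using limit_above assms by blast
  then show ?thesis using club_unb[OF assms(1)] by (meson less_le_trans)
qed

lemma club_tail:
  assumes "club_in C d" "b < d"
  shows "club_in (C \<inter> {b..}) d"
proof (rule club_intro)
  show "C \<inter> {b..} \<subseteq> {..<d}" using club_sub[OF assms(1)] by auto
  show "\<exists>g\<in>C \<inter> {b..}. b' \<le> g" if "b' < d" for b'
  proof -
    have "max b b' < d" using that assms(2) by simp
    then obtain g where "g \<in> C" "max b b' \<le> g" using club_unb[OF assms(1)] by blast
    then show ?thesis by auto
  qed
  show "g \<in> C \<inter> {b..}" if gd: "g < d" and ag: "acc_pt (C \<inter> {b..}) g" for g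
  proof -
    have "acc_pt C g" using ag unfolding acc_pt_def by blast
    then have "g \<in> C" using club_closed assms(1) gd by blast
    moreover obtain c where "c < g" using ag unfolding acc_pt_def is_limit_def by blast
    then obtain x where "x \<in> C \<inter> {b..}" "x < g" using ag unfolding acc_pt_def by blast
    ultimately show ?thesis by auto
  qed
qed

definition above :: "'a::wellorder set \<Rightarrow> 'a \<Rightarrow> 'a" where
  "above C y = (SOME z. z \<in> C \<and> y < z)"

lemma above:
  assumes "club_in C d" "is_limit d" "y < d"
  shows "above C y \<in> C" "y < above C y" "above C y < d"
proof -
  have "\<exists>z. z \<in> C \<and> y < z" using club_unb_strict[OF assms] by blast
  then have *: "above C y \<in> C \<and> y < above C y" unfolding above_def by (rule someI_ex)
  then show "above C y \<in> C" "y < above C y" by auto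
  show "above C y < d" using * club_sub[OF assms(1)] by auto
qed

lemma club_inter:
  assumes unc: "uncountable {..<(chi::'a::wellorder)}" and oc: "(om::'a) < cof d"
    and c1: "club_in C1 d" and c2: "club_in C2 d"
  shows "club_in (C1 \<inter> C2) d"
proof (rule club_intro)
  have lim: "is_limit d" using limit_of_om[OF unc oc] .
  show "C1 \<inter> C2 \<subseteq> {..<d}" using club_sub[OF c1] by auto
  show "g \<in> C1 \<inter> C2" if "g < d" "acc_pt (C1 \<inter> C2) g" for g
    using that club_closed[OF c1] club_closed[OF c2] unfolding acc_pt_def by blast
  fix b assume bd: "b < d"
  define x where "x n = rec_nat (above C1 b) (\<lambda>m y. above (if even m then C2 else C1) y) n" for n
  have x0: "x 0 = above C1 b" by (simp add: x_def)
  have xS: "x (Suc m) = above (if even m then C2 else C1) (x m)" for m by (simp add: x_def)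
  have P: "x n < d \<and> x n \<in> (if even n then C1 else C2)" for n
  proof (induction n)
    case 0 show ?case using above[OF c1 lim bd] x0 by simp
  next
    case (Suc m)
    then have "x m < d" by simp
    then show ?case using above[OF c1 lim] above[OF c2 lim] xS[of m] by auto
  qed
  have inc: "x m < x (Suc m)" for m
    using above(2)[OF c1 lim] above(2)[OF c2 lim] xS[of m] P[of m] by auto
  obtain s where s: "s < d" "\<forall>n. x n < s" "is_limit s" "\<forall>b<s. \<exists>n. b < x n"
    using omega_sup[OF unc oc, of x] P inc by blast
  have accs: "acc_pt C1 s \<and> acc_pt C2 s"
    unfolding acc_pt_def
  proof (intro conjI allI impI)
    fix c assume "c < s"
    then obtain n where n: "c < x n" using s by blast
    have a: "c \<le> x n" "c \<le> x (Suc n)" using n inc[of n] by auto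
    show "\<exists>y\<in>C1. c \<le> y \<and> y < s"
      using a P[of n] P[of "Suc n"] s(2) by (cases "even n") auto
    show "\<exists>y\<in>C2. c \<le> y \<and> y < s"
      using a P[of n] P[of "Suc n"] s(2) by (cases "even n") auto
  qed (use s in auto)
  have "s \<in> C1 \<inter> C2" using accs club_closed[OF c1] club_closed[OF c2] s(1) by blast
  moreover have "b \<le> s" using above(2)[OF c1 lim bd] x0 s(2)[rule_format, of 0] by simp
  ultimately show "\<exists>g\<in>C1 \<inter> C2. b \<le> g" by blast
qed

lemma smo_le:
  fixes f :: "'a::linorder \<Rightarrow> 'b::linorder"
  assumes "strict_mono_on A f" "i \<in> A" "j \<in> A" "i \<le> j"
  shows "f i \<le> f j"
proof (cases "i = j")
  case False
  then have "i < j" using assms(4) by simp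
  then show ?thesis using assms unfolding strict_mono_on_def by (simp add: less_imp_le)
qed simp

lemma smo_less_rev:
  fixes f :: "'a::linorder \<Rightarrow> 'b::linorder"
  assumes "strict_mono_on A f" "i \<in> A" "j \<in> A" "f i < f j"
  shows "i < j"
  using smo_le[OF assms(1) assms(3) assms(2)] assms(4) by (meson leD le_less_linear)

lemma smo_le_rev:
  fixes f :: "'a::linorder \<Rightarrow> 'b::linorder"
  assumes "strict_mono_on A f" "i \<in> A" "j \<in> A" "f i \<le> f j"
  shows "i \<le> j"
  using assms unfolding strict_mono_on_def by (meson leD le_less_linear)

definition normal_on :: "('a::wellorder \<Rightarrow> 'a) \<Rightarrow> 'a \<Rightarrow> 'a \<Rightarrow> bool" where
  "normal_on e k d \<longleftrightarrow> strict_mono_on {..<k} e \<and> (\<forall>j<k. e j < d) \<and> (\<forall>b<d. \<exists>j<k. b \<le> e j)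
     \<and> (\<forall>j<k. is_limit j \<longrightarrow> (\<forall>x. (\<forall>i<j. e i < x) \<longrightarrow> e j \<le> x))"

definition enum :: "'a::wellorder set \<Rightarrow> ('a \<Rightarrow> 'a) \<Rightarrow> 'a \<Rightarrow> 'a" where
  "enum E f = wfrec {(x,y). x < y} (\<lambda>r i. LEAST x. x \<in> E \<and> (\<forall>j<i. r j < x \<and> f j \<le> x))"

lemma enum_eq: "enum E f i = (LEAST x. x \<in> E \<and> (\<forall>j<i. enum E f j < x \<and> f j \<le> x))"
  by (subst enum_def, subst wfrec[OF wf], simp add: enum_def[symmetric] cut_apply)

lemma normal_enum:
  assumes ck: "cof d = k" and lk: "is_limit k" and E: "club_in E d"
  shows "\<exists>e. normal_on e k d \<and> (\<forall>j<k. e j \<in> E)"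
proof -
  obtain f where f: "f ` {..<k} \<subseteq> {..<d}" "\<forall>b<d. \<exists>g<k. b \<le> f g"
    using cof_ex[of d] ck by blast
  define e where "e = enum E f"
  have P: "i < k \<longrightarrow> e i \<in> E \<and> (\<forall>j<i. e j < e i \<and> f j \<le> e i)" for i
  proof (induction i rule: less_induct)
    case (less i)
    show ?case
    proof
      assume ik: "i < k"
      have ed: "e j < d" if "j < i" for j
        using less[OF that] that ik club_sub[OF E] by auto
      obtain b1 where b1: "b1 < d" "\<forall>a\<in>e ` {..<i}. a < b1"
        using small_bounded[of i d "e ` {..<i}" e] ik ck ed by auto
      have fi: "f ` {..<i} \<subseteq> {..<d}" using f(1) ik by (auto intro: less_trans)
      obtain b2 where b2: "b2 < d" "\<forall>a\<in>f ` {..<i}. a < b2"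
        using small_bounded[of i d "f ` {..<i}" f] ik ck fi by blast
      obtain x where x: "x \<in> E" "max b1 b2 \<le> x"
        using club_unb[OF E, of "max b1 b2"] b1 b2 by auto
      have "x \<in> E \<and> (\<forall>j<i. e j < x \<and> f j \<le> x)"
        using x b1 b2 by (auto intro: less_le_trans less_imp_le)
      then have "e i \<in> E \<and> (\<forall>j<i. e j < e i \<and> f j \<le> e i)"
        unfolding e_def by (subst (1 2 3) enum_eq) (rule LeastI[of _ x], simp)
      then show "e i \<in> E \<and> (\<forall>j<i. e j < e i \<and> f j \<le> e i)" .
    qed
  qed
  have smo: "strict_mono_on {..<k} e"
    unfolding strict_mono_on_def using P by auto
  have ed: "\<forall>j<k. e j < d" using P club_sub[OF E] by auto
  have cofin: "\<forall>b<d. \<exists>j<k. b \<le> e j"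
  proof (intro allI impI)
    fix b assume "b < d"
    then obtain g where g: "g < k" "b \<le> f g" using f by blast
    obtain j where "g < j" "j < k" using lk g unfolding is_limit_def by blast
    then show "\<exists>j<k. b \<le> e j" using P g by (meson order_trans)
  qed
  have cont: "\<forall>j<k. is_limit j \<longrightarrow> (\<forall>x. (\<forall>i<j. e i < x) \<longrightarrow> e j \<le> x)"
  proof (intro allI impI)
    fix j x assume jk: "j < k" and lj: "is_limit j" and ub: "\<forall>i<j. e i < x"
    define s where "s = (LEAST y. \<forall>i<j. e i < y)"
    have s1: "\<forall>i<j. e i < s" unfolding s_def by (rule LeastI[of _ x]) (rule ub)
    have sx: "s \<le> x" unfolding s_def by (rule Least_le) (rule ub)
    have sej: "s \<le> e j" unfolding s_def by (rule Least_le) (use P jk in auto)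
    have s2: "\<exists>i<j. c < e i" if "c < s" for c
    proof (rule ccontr)
      assume "\<not> (\<exists>i<j. c < e i)"
      then have "\<forall>i<j. e i \<le> c" using not_less by blast
      then have "\<forall>i<j. e i < c"
        using lj P jk unfolding is_limit_def by (meson less_le_trans less_trans)
      then have "s \<le> c" unfolding s_def by (rule Least_le)
      then show False using that by simp
    qed
    have "acc_pt E s"
      unfolding acc_pt_def is_limit_def
    proof (intro conjI allI impI)
      obtain i where "i < j" using lj unfolding is_limit_def by blast
      then show "\<exists>b. b < s" using s1 by blast
    next
      fix c assume "c < s"
      then obtain i where "i < j" "c < e i" using s2 by blast
      then show "\<exists>g>c. g < s" using s1 by blast
    next
      fix c assume "c < s"
      then obtain i where "i < j" "c < e i" using s2 by blast
      then show "\<exists>x\<in>E. c \<le> x \<and> x < s" using s1 P jk by (meson less_imp_le less_trans)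
    qed
    then have sE: "s \<in> E" using club_closed[OF E] sej ed jk by (meson le_less_trans)
    have "\<forall>i<j. f i \<le> s"
    proof (intro allI impI)
      fix i assume "i < j"
      then obtain i' where "i < i'" "i' < j" using lj unfolding is_limit_def by blast
      then show "f i \<le> s" using P s1 jk by (meson less_imp_le less_trans order_trans)
    qed
    then have "e j \<le> s"
      unfolding e_def by (subst enum_eq) (rule Least_le, use sE s1 e_def in simp)
    then show "e j \<le> x" using sx by simp
  qed
  show ?thesis using smo ed cofin cont P unfolding normal_on_def by blast
qed

lemma normal_props:
  assumes "normal_on e k d"
  shows "strict_mono_on {..<k} e" "\<And>j. j < k \<Longrightarrow> e j < d" "\<And>b. b < d \<Longrightarrow> \<exists>j<k. b \<le> e j"
    "\<And>j x. j < k \<Longrightarrow> is_limit j \<Longrightarrow> (\<forall>i<j. e i < x) \<Longrightarrow> e j \<le> x"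
  using assms unfolding normal_on_def by blast+

lemma normal_less_iff:
  assumes "normal_on e k d" "i < k" "j < k"
  shows "e i < e j \<longleftrightarrow> i < j" "e i \<le> e j \<longleftrightarrow> i \<le> j"
proof -
  have s: "strict_mono_on {..<k} e" using normal_props(1)[OF assms(1)] .
  show "e i < e j \<longleftrightarrow> i < j"
    using smo_less_rev[OF s, of i j] s assms unfolding strict_mono_on_def by auto
  show "e i \<le> e j \<longleftrightarrow> i \<le> j"
    using smo_le_rev[OF s, of i j] smo_le[OF s, of i j] assms by auto
qed

lemma normal_cont_ex:
  assumes "normal_on e k d" "J < k" "is_limit J" "b < e J"
  shows "\<exists>j<J. b \<le> e j"
proof (rule ccontr)
  assume "\<not> ?thesis"
  then have "\<forall>i<J. e i < b" using not_le by blast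
  then have "e J \<le> b" using normal_props(4)[OF assms(1) assms(2) assms(3)] by blast
  then show False using assms(4) by simp
qed

lemma normal_limit_point:
  assumes N: "normal_on e k d" and D: "D \<subseteq> {..<k}" and gd: "g < d"
    and acc: "acc_pt (e ` D) g"
  shows "\<exists>J<k. is_limit J \<and> e J = g \<and> (\<forall>j<J. \<exists>j'\<in>D. j \<le> j' \<and> j' < J)"
proof -
  have ex: "\<exists>i. i < k \<and> g \<le> e i" using normal_props(3)[OF N gd] by blast
  define J where "J = (LEAST i. i < k \<and> g \<le> e i)"
  have J: "J < k" "g \<le> e J" using LeastI_ex[OF ex] unfolding J_def by auto
  have below: "e j < g" if "j < J" for j
  proof (rule ccontr)
    assume "\<not> e j < g"
    then have "J \<le> j" unfolding J_def using that J(1) by (intro Least_le) (auto simp: not_less)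
    then show False using that by simp
  qed
  have lg: "is_limit g" and cg: "\<forall>b<g. \<exists>x\<in>e ` D. b \<le> x \<and> x < g"
    using acc unfolding acc_pt_def by auto
  have key: "\<exists>j'\<in>D. c < e j' \<and> j' < J" if cg0: "c < g" for c
  proof -
    obtain c' where "c < c'" "c' < g" using limit_above[OF lg cg0] by blast
    then obtain j' where j': "j' \<in> D" "c' \<le> e j'" "e j' < g" using cg by blast
    have "j' < k" using j'(1) D by auto
    have "j' < J"
    proof (rule ccontr)
      assume "\<not> j' < J"
      then have "e J \<le> e j'" using normal_less_iff(2)[OF N J(1) \<open>j' < k\<close>] by simp
      then show False using J(2) j'(3) by simp
    qed
    then show ?thesis using j' \<open>c < c'\<close> by (meson less_le_trans)
  qed
  have cofD: "\<forall>j<J. \<exists>j'\<in>D. j \<le> j' \<and> j' < J"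
  proof (intro allI impI)
    fix j assume "j < J"
    then have "e j < g" by (rule below)
    then obtain j' where j': "j' \<in> D" "e j < e j'" "j' < J" using key by blast
    have "j < j'" using normal_less_iff(1)[OF N, of j j'] j' D \<open>j < J\<close> J(1) by auto
    then show "\<exists>j'\<in>D. j \<le> j' \<and> j' < J" using j' less_imp_le by blast
  qed
  have lJ: "is_limit J"
    unfolding is_limit_def
  proof (intro conjI allI impI)
    obtain c where "c < g" using lg unfolding is_limit_def by blast
    then show "\<exists>b. b < J" using key by blast
  next
    fix j assume "j < J"
    then have "e j < g" by (rule below)
    then obtain j' where j': "j' \<in> D" "e j < e j'" "j' < J" using key by blast
    have "j < j'" using normal_less_iff(1)[OF N, of j j'] j' D \<open>j < J\<close> J(1) by auto
    then show "\<exists>g>j. g < J" using j' by blast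
  qed
  have "e J \<le> g" using normal_props(4)[OF N J(1) lJ] below by blast
  then have "e J = g" using J(2) by simp
  then show ?thesis using J(1) lJ cofD by blast
qed

lemma normal_image_club:
  assumes N: "normal_on e k d" and D: "club_in D k"
  shows "club_in (e ` D) d"
proof (rule club_intro)
  have Dk: "D \<subseteq> {..<k}" using club_sub[OF D] .
  show "e ` D \<subseteq> {..<d}" using Dk normal_props(2)[OF N] by auto
  show "\<exists>g\<in>e ` D. b \<le> g" if bd: "b < d" for b
  proof -
    obtain j where j: "j < k" "b \<le> e j" using normal_props(3)[OF N bd] by blast
    obtain j' where j': "j' \<in> D" "j \<le> j'" using club_unb[OF D j(1)] by blast
    have "e j \<le> e j'" using normal_less_iff(2)[OF N j(1)] j' Dk by auto
    then show ?thesis using j j' by (meson image_eqI order_trans)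
  qed
  show "g \<in> e ` D" if gd: "g < d" and ag: "acc_pt (e ` D) g" for g
  proof -
    obtain J where J: "J < k" "is_limit J" "e J = g" "\<forall>j<J. \<exists>j'\<in>D. j \<le> j' \<and> j' < J"
      using normal_limit_point[OF N Dk gd ag] by blast
    have "acc_pt D J" unfolding acc_pt_def using J by blast
    then have "J \<in> D" using club_closed[OF D J(1)] by blast
    then show ?thesis using J(3) by blast
  qed
qed

lemma normal_restrict:
  assumes N: "normal_on e k d" and J: "J < k" "is_limit J"
  shows "normal_on e J (e J)"
  unfolding normal_on_def
proof (intro conjI allI impI)
  show "strict_mono_on {..<J} e"
    using normal_props(1)[OF N] J(1) unfolding strict_mono_on_def by (meson lessThan_iff less_trans)
  show "e j < e J" if "j < J" for j using normal_less_iff(1)[OF N] that J(1) by auto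
  show "\<exists>j<J. b \<le> e j" if "b < e J" for b using normal_cont_ex[OF N J that] .
  show "e j \<le> x" if "j < J" "is_limit j" "\<forall>i<j. e i < x" for j x
    using normal_props(4)[OF N] that J(1) by (meson less_trans)
qed

lemma normal_cof:
  assumes N: "normal_on e k d" and J: "J < k" "is_limit J"
  shows "cof (e J) = cof J"
proof (rule antisym)
  obtain f where f: "f ` {..<cof J} \<subseteq> {..<J}" "\<forall>b<J. \<exists>g<cof J. b \<le> f g"
    using cof_ex[of J] by blast
  show "cof (e J) \<le> cof J"
  proof (rule cof_le[of "e \<circ> f"])
    show "(e \<circ> f) ` {..<cof J} \<subseteq> {..<e J}"
      using f(1) normal_less_iff(1)[OF N _ J(1)] J(1) by (auto intro: less_trans)
    show "\<forall>b<e J. \<exists>g<cof J. b \<le> (e \<circ> f) g"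
    proof (intro allI impI)
      fix b assume "b < e J"
      then obtain j where j: "j < J" "b \<le> e j" using normal_cont_ex[OF N J] by blast
      then obtain g where g: "g < cof J" "j \<le> f g" using f(2) by blast
      have "f g < J" using f(1) g(1) by auto
      then have "e j \<le> e (f g)" using normal_less_iff(2)[OF N] g j J(1) by (meson less_trans)
      then show "\<exists>g<cof J. b \<le> (e \<circ> f) g" using g j by auto
    qed
  qed
next
  obtain f where f: "f ` {..<cof (e J)} \<subseteq> {..<e J}" "\<forall>b<e J. \<exists>g<cof (e J). b \<le> f g"
    using cof_ex[of "e J"] by blast
  define F where "F x = (LEAST i. f x \<le> e i)" for x
  have F: "F x < J \<and> f x \<le> e (F x)" if "x < cof (e J)" for x
  proof -
    have fx: "f x < e J" using f(1) that by auto
    have "f x \<le> e (F x)" unfolding F_def by (rule LeastI[of _ J]) (use fx in simp)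
    moreover have "F x \<le> J" unfolding F_def by (rule Least_le) (use fx in simp)
    moreover have "F x \<noteq> J"
    proof
      assume FJ: "F x = J"
      have "\<forall>i<J. e i < f x"
      proof (intro allI impI)
        fix i assume "i < J"
        then have "\<not> f x \<le> e i" using not_less_Least[of i "\<lambda>i. f x \<le> e i"] FJ
          unfolding F_def by blast
        then show "e i < f x" by simp
      qed
      then have "e J \<le> f x" using normal_props(4)[OF N J] by blast
      then show False using fx by simp
    qed
    ultimately show ?thesis by simp
  qed
  show "cof J \<le> cof (e J)"
  proof (rule cof_le[of F])
    show "F ` {..<cof (e J)} \<subseteq> {..<J}" using F by auto
    show "\<forall>b<J. \<exists>g<cof (e J). b \<le> F g"
    proof (intro allI impI)
      fix b assume bJ: "b < J"
      then have "e b < e J" using normal_less_iff(1)[OF N _ J(1)] J(1) by (meson less_trans)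
      then obtain g where g: "g < cof (e J)" "e b \<le> f g" using f(2) by blast
      then have "e b \<le> e (F g)" using F[OF g(1)] by (meson order_trans)
      then have "b \<le> F g" using normal_less_iff(2)[OF N] F[OF g(1)] bJ J(1) by (meson less_trans)
      then show "\<exists>g<cof (e J). b \<le> F g" using g by blast
    qed
  qed
qed

lemma normal_preimage_club:
  assumes unc: "uncountable {..<(chi::'a::wellorder)}" and N: "normal_on e k d"
    and i: "i < k" "is_limit i" and oc: "(om::'a) < cof (e i)" and C: "club_in C (e i)"
  shows "club_in {j. j < i \<and> e j \<in> C} i"
proof -
  have Ni: "normal_on e i (e i)" using normal_restrict[OF N i] .
  have R: "club_in (e ` {..<i}) (e i)" using normal_image_club[OF Ni club_univ[OF i(2)]] .
  have CR: "club_in (C \<inter> e ` {..<i}) (e i)" using club_inter[OF unc oc C R] .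
  show ?thesis
  proof (rule club_intro)
    show "{j. j < i \<and> e j \<in> C} \<subseteq> {..<i}" by auto
    show "\<exists>g\<in>{j. j < i \<and> e j \<in> C}. b \<le> g" if "b < i" for b
    proof -
      have "e b < e i" using normal_less_iff(1)[OF N] that i(1) by (meson less_trans)
      then obtain x where x: "x \<in> C \<inter> e ` {..<i}" "e b \<le> x" using club_unb[OF CR] by blast
      then obtain j where j: "j < i" "x = e j" by blast
      have "b \<le> j" using normal_less_iff(2)[OF Ni that j(1)] x j by simp
      then show ?thesis using j x by blast
    qed
    show "g \<in> {j. j < i \<and> e j \<in> C}" if gi: "g < i" and ag: "acc_pt {j. j < i \<and> e j \<in> C} g" for g
    proof -
      have lg: "is_limit g" using ag unfolding acc_pt_def by blast
      have "acc_pt C (e g)"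
        unfolding acc_pt_def
      proof (intro conjI allI impI)
        show "is_limit (e g)"
          unfolding is_limit_def
        proof (intro conjI allI impI)
          obtain j where "j < g" using lg unfolding is_limit_def by blast
          then show "\<exists>b. b < e g" using normal_less_iff(1)[OF Ni _ gi] gi by (meson less_trans)
        next
          fix b assume "b < e g"
          then obtain j where j: "j < g" "b \<le> e j" using normal_cont_ex[OF Ni gi lg] by blast
          obtain j' where "j < j'" "j' < g" using limit_above[OF lg j(1)] by blast
          then have "e j < e j'" "e j' < e g" using normal_less_iff(1)[OF Ni] gi j
            by (meson less_trans)+
          then show "\<exists>g'>b. g' < e g" using j by (meson le_less_trans)
        qed
        fix b assume "b < e g"
        then obtain j where j: "j < g" "b \<le> e j" using normal_cont_ex[OF Ni gi lg] by blast
        obtain j' where j': "j' < i" "e j' \<in> C" "j \<le> j'" "j' < g" using ag j(1) unfolding acc_pt_def by blast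
        have "e j \<le> e j'" "e j' < e g" using normal_less_iff[OF Ni] j' j gi by (meson less_trans)+
        then show "\<exists>x\<in>C. b \<le> x \<and> x < e g" using j j' by (meson order_trans)
      qed
      moreover have "e g < e i" using normal_less_iff(1)[OF N] gi i(1) by (meson less_trans)
      ultimately have "e g \<in> C" using club_closed[OF C] by blast
      then show ?thesis using gi by blast
    qed
  qed
qed

lemma card_limit:
  assumes "is_cardinal a" "infinite {..<a}"
  shows "is_limit a"
  unfolding is_limit_def
proof (intro conjI allI impI)
  show "\<exists>b. b < a" using assms(2) by (metis finite.emptyI lessThan_iff subsetI subset_empty)
  fix b assume ba: "b < a"
  show "\<exists>g>b. g < a"
  proof (rule ccontr)
    assume "\<not> ?thesis"
    then have eq: "{..<a} = insert b {..<b}" using ba by (auto simp: not_less) (meson le_less_trans not_less linorder_neqE)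
    then have "infinite {..<b}" using assms(2) by auto
    then have "insert b {..<b} \<approx> {..<b}" by (rule infinite_insert_eqpoll)
    then have "{..<b} \<approx> {..<a}" using eq eqpoll_sym by metis
    then show False using assms(1) ba unfolding is_cardinal_def eqpoll_def by blast
  qed
qed

lemma reg_limit: "regular_cardinal a \<Longrightarrow> is_limit a"
  unfolding regular_cardinal_def using card_limit by blast

lemma inj_club_strict:
  fixes chi :: "'a::wellorder"
  assumes unc: "uncountable {..<chi}" and cc: "cof chi = chi" and lc: "is_limit chi"
    and gi: "inj_on g {..<chi}" and gm: "g ` {..<chi} \<subseteq> {..<chi}"
  shows "\<exists>D. club_in D chi \<and> strict_mono_on D g"
proof -
  have oc: "(om::'a) < cof chi" using om_props(3)[OF unc] cc by simp
  define s where "s i = (LEAST x. \<forall>j<i. g j < x)" for i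
  have s_lt: "s i < chi \<and> (\<forall>j<i. g j < s i)" if ic: "i < chi" for i
  proof -
    have sub: "g ` {..<i} \<subseteq> {..<chi}" using gm ic by (auto intro: less_trans)
    have "i < cof chi" using ic cc by simp
    then obtain b where b: "b < chi" "\<forall>a\<in>g ` {..<i}. a < b"
      using small_bounded[of i chi "g ` {..<i}" g] sub by blast
    have "\<forall>j<i. g j < b" using b by auto
    then have "s i \<le> b" "\<forall>j<i. g j < s i" unfolding s_def
      by (rule Least_le, rule LeastI[of "\<lambda>x. \<forall>j<i. g j < x" b])
    then show ?thesis using b by simp
  qed
  have s_lub: "s i \<le> x" if "\<forall>j<i. g j < x" for i x
    unfolding s_def using that by (rule Least_le)
  have s_below: "\<exists>j'<i. g j \<le> g j'" if "g j < s i" for i j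
  proof (rule ccontr)
    assume "\<not> ?thesis"
    then have "\<forall>j'<i. g j' < g j" by (auto simp: not_le)
    then have "s i \<le> g j" by (rule s_lub)
    then show False using that by simp
  qed
  define K where "K = {i. i < chi \<and> is_limit i \<and> (\<forall>j<chi. g j < s i \<longrightarrow> j < i)}"
  have smo: "strict_mono_on K g"
    unfolding strict_mono_on_def
  proof (intro allI impI, elim conjE)
    fix a b assume a: "a \<in> K" and b: "b \<in> K" and ab: "a < b"
    have "g a < s b" using s_lt[of b] b ab unfolding K_def by auto
    moreover have "s b \<le> g b"
    proof (rule ccontr)
      assume "\<not> s b \<le> g b"
      then have "g b < s b" by simp
      then have "b < b" using b unfolding K_def by blast
      then show False by simp
    qed
    ultimately show "g a < g b" by simp
  qed
  define P where "P y = {j. j < chi \<and> g j < s y}" for y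
  have Pb: "\<exists>c<chi. \<forall>j\<in>P y. j < c" if "y < chi" for y
  proof -
    have "inj_on g (P y)" using gi unfolding P_def by (rule inj_on_subset) auto
    moreover have "g ` P y \<subseteq> {..<s y}" unfolding P_def by auto
    moreover have "s y < cof chi" using s_lt[OF that] cc by simp
    ultimately show ?thesis using small_bounded_inj[of "s y" chi g "P y"] unfolding P_def by auto
  qed
  define step where "step y = (SOME z. z < chi \<and> y < z \<and> (\<forall>j\<in>P y. j < z))" for y
  have step: "step y < chi \<and> y < step y \<and> (\<forall>j\<in>P y. j < step y)" if yc: "y < chi" for y
  proof -
    obtain c where c: "c < chi" "\<forall>j\<in>P y. j < c" using Pb[OF yc] by blast
    have "max c y < chi" using c yc by simp
    then obtain z where z: "max c y < z" "z < chi" using limit_above[OF lc] by blast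
    have "z < chi \<and> y < z \<and> (\<forall>j\<in>P y. j < z)" using z c by auto
    then show ?thesis unfolding step_def by (rule someI)
  qed
  have Kc: "club_in K chi"
  proof (rule club_intro)
    show "K \<subseteq> {..<chi}" unfolding K_def by auto
    show "\<exists>g\<in>K. b \<le> g" if bchi: "b < chi" for b
    proof -
      define x where "x n = (step ^^ n) b" for n
      have xc: "x n < chi" for n by (induction n) (auto simp: x_def bchi step)
      have xs: "x (Suc n) = step (x n)" for n by (simp add: x_def)
      have inc: "x n < x (Suc n)" for n using step[OF xc[of n]] xs by simp
      obtain t where t: "t < chi" "\<forall>n. x n < t" "is_limit t" "\<forall>b<t. \<exists>n. b < x n"
        using omega_sup[OF unc oc, of x] xc inc by blast
      have "t \<in> K"
        unfolding K_def
      proof (intro CollectI conjI allI impI)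
        fix j assume jc: "j < chi" and gj: "g j < s t"
        obtain j' where j': "j' < t" "g j \<le> g j'" using s_below[OF gj] by blast
        obtain n where n: "j' < x n" using t(4) j'(1) by blast
        have "g j' < s (x n)" using s_lt[OF xc[of n]] n by blast
        then have "j \<in> P (x n)" using j'(2) jc unfolding P_def by auto
        then have "j < x (Suc n)" using step[OF xc[of n]] xs by simp
        then show "j < t" using t(2) by (meson less_trans)
      qed (use t in auto)
      moreover have "b \<le> t" using t(2)[rule_format, of 0] by (simp add: x_def)
      ultimately show ?thesis by blast
    qed
    show "t0 \<in> K" if gc: "t0 < chi" and ag: "acc_pt K t0" for t0
      unfolding K_def
    proof (intro CollectI conjI allI impI)
      show "t0 < chi" by (rule gc)
      show "is_limit t0" using ag unfolding acc_pt_def by blast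
      fix j assume jc: "j < chi" and gj: "g j < s t0"
      obtain j' where j': "j' < t0" "g j \<le> g j'" using s_below[OF gj] by blast
      obtain b' where b': "j' < b'" "b' < t0" using limit_above[OF \<open>is_limit t0\<close> j'(1)] by blast
      then obtain x where x: "x \<in> K" "b' \<le> x" "x < t0" using ag unfolding acc_pt_def by blast
      have "j' < x" using b' x by simp
      then have "g j' < s x" using s_lt[of x] x unfolding K_def by blast
      then have "j < x" using x j'(2) jc unfolding K_def by auto
      then show "j < t0" using x by simp
    qed
  qed
  show ?thesis using Kc smo by blast
qed

definition good :: "'a::wellorder \<Rightarrow> 'a \<Rightarrow> bool" where
  "good eta chi \<longleftrightarrow> (\<exists>h. maps_into h eta chi \<and> (\<forall>d\<in>S_cof eta chi. \<exists>C. club_in C d \<and> inj_on h C))"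

lemma inj_to_strict:
  fixes chi :: "'a::wellorder"
  assumes unc: "uncountable {..<chi}" and reg: "regular_cardinal chi"
    and cd: "cof d = chi" and C: "club_in C d" and hi: "inj_on h C" and hm: "h ` C \<subseteq> {..<chi}"
  shows "\<exists>C'. club_in C' d \<and> strict_mono_on C' h"
proof -
  have lc: "is_limit chi" using reg_limit[OF reg] .
  have cc: "cof chi = chi" using reg unfolding regular_cardinal_def by blast
  obtain e where N: "normal_on e chi d" and eC: "\<forall>j<chi. e j \<in> C"
    using normal_enum[OF cd lc C] by blast
  have ei: "inj_on e {..<chi}" using normal_props(1)[OF N] by (rule strict_mono_on_imp_inj_on)
  have gi: "inj_on (h \<circ> e) {..<chi}"
  proof (rule comp_inj_on[OF ei])
    show "inj_on h (e ` {..<chi})" by (rule inj_on_subset[OF hi]) (use eC in auto)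
  qed
  have gm: "(h \<circ> e) ` {..<chi} \<subseteq> {..<chi}" using hm eC by auto
  obtain D where D: "club_in D chi" "strict_mono_on D (h \<circ> e)"
    using inj_club_strict[OF unc cc lc gi gm] by blast
  have "club_in (e ` D) d" using normal_image_club[OF N D(1)] .
  moreover have "strict_mono_on (e ` D) h"
    unfolding strict_mono_on_def
  proof (intro allI impI, elim conjE)
    fix x y assume "x \<in> e ` D" "y \<in> e ` D" "x < y"
    then obtain a b where ab: "a \<in> D" "b \<in> D" "x = e a" "y = e b" by blast
    have "a < chi" "b < chi" using ab club_sub[OF D(1)] by auto
    then have "a < b" using normal_less_iff(1)[OF N] ab \<open>x < y\<close> by simp
    then show "h x < h y" using D(2) ab unfolding strict_mono_on_def by auto
  qed
  ultimately show ?thesis by blast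
qed

lemma part2_equiv:
  fixes chi :: "'a::wellorder"
  assumes unc: "uncountable {..<chi}" and reg: "regular_cardinal chi"
    and hm: "maps_into h eta chi"
  shows "(\<forall>d\<in>S_cof eta chi. \<exists>C. club_in C d \<and> strict_mono_on C h) \<longleftrightarrow>
         (\<forall>d\<in>S_cof eta chi. \<exists>C. club_in C d \<and> inj_on h C)"
proof
  assume "\<forall>d\<in>S_cof eta chi. \<exists>C. club_in C d \<and> strict_mono_on C h"
  then show "\<forall>d\<in>S_cof eta chi. \<exists>C. club_in C d \<and> inj_on h C"
    using strict_mono_on_imp_inj_on by blast
next
  assume a: "\<forall>d\<in>S_cof eta chi. \<exists>C. club_in C d \<and> inj_on h C"
  show "\<forall>d\<in>S_cof eta chi. \<exists>C. club_in C d \<and> strict_mono_on C h"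
  proof
    fix d assume dS: "d \<in> S_cof eta chi"
    then obtain C where C: "club_in C d" "inj_on h C" using a by blast
    have "C \<subseteq> {..<eta}" using club_sub[OF C(1)] dS unfolding S_cof_def by auto
    then have "h ` C \<subseteq> {..<chi}" using hm unfolding maps_into_def by blast
    then show "\<exists>C. club_in C d \<and> strict_mono_on C h"
      using inj_to_strict[OF unc reg _ C] dS unfolding S_cof_def by blast
  qed
qed

lemma strong_iff_good:
  fixes chi :: "'a::wellorder"
  assumes unc: "uncountable {..<chi}" and reg: "regular_cardinal chi" and lt: "chi < eta"
  shows "strong_nonrefl eta chi \<longleftrightarrow> good eta chi"
  unfolding strong_nonrefl_def good_def using part2_equiv[OF unc reg] lt by blast

lemma pairing:
  assumes "infinite A"
  shows "\<exists>p. inj_on p (A \<times> A) \<and> p ` (A \<times> A) \<subseteq> A"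
proof -
  have "\<exists>f. bij_betw f (A \<times> A) A"
    using card_of_Times_same_infinite[OF assms] card_of_ordIso by blast
  then show ?thesis unfolding bij_betw_def by blast
qed

lemma combine:
  assumes p: "inj_on p ({..<chi} \<times> {..<chi})" "p ` ({..<chi} \<times> {..<chi}) \<subseteq> {..<chi}"
    and h1: "maps_into h1 eta chi" and h2: "maps_into h2 eta chi"
  shows "maps_into (\<lambda>x. p (h1 x, h2 x)) eta chi"
    "\<And>C. C \<subseteq> {..<eta} \<Longrightarrow> inj_on h1 C \<or> inj_on h2 C \<Longrightarrow> inj_on (\<lambda>x. p (h1 x, h2 x)) C"
proof -
  show "maps_into (\<lambda>x. p (h1 x, h2 x)) eta chi"
    using p(2) h1 h2 unfolding maps_into_def by blast
  fix C assume C: "C \<subseteq> {..<eta}" "inj_on h1 C \<or> inj_on h2 C"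
  show "inj_on (\<lambda>x. p (h1 x, h2 x)) C"
  proof (rule inj_onI)
    fix x y assume xy: "x \<in> C" "y \<in> C" "p (h1 x, h2 x) = p (h1 y, h2 y)"
    have "(h1 x, h2 x) \<in> {..<chi} \<times> {..<chi}" "(h1 y, h2 y) \<in> {..<chi} \<times> {..<chi}"
      using xy C h1 h2 unfolding maps_into_def by blast+
    then have "(h1 x, h2 x) = (h1 y, h2 y)" using p(1) xy(3) unfolding inj_on_def by blast
    then show "x = y" using C(2) xy(1,2) unfolding inj_on_def by blast
  qed
qed

lemma good_small:
  fixes chi :: "'a::wellorder"
  assumes unc: "uncountable {..<chi}" and "a \<le> chi"
  shows "good a chi"
proof -
  have "S_cof a chi = {}"
  proof -
    have "cof d \<noteq> chi" if "d < a" for d using cof_le_self[of d] that assms(2) by simp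
    then show ?thesis unfolding S_cof_def by blast
  qed
  moreover have "maps_into (\<lambda>_. om) a chi" using om_props(3)[OF unc] unfolding maps_into_def by auto
  ultimately show ?thesis unfolding good_def by blast
qed

lemma S_cof_limit:
  fixes chi :: "'a::wellorder"
  assumes unc: "uncountable {..<chi}" and reg: "regular_cardinal chi" and d: "d \<in> S_cof eta chi"
  shows "is_limit d"
proof -
  have "cof d = chi" using d unfolding S_cof_def by blast
  then show ?thesis using limit_of_om[OF unc] om_props(3)[OF unc] by simp
qed

lemma glue:
  fixes chi :: "'a::wellorder"
  assumes unc: "uncountable {..<chi}" and reg: "regular_cardinal chi"
    and leta: "is_limit eta" and E: "club_in E eta" and below: "\<forall>a<eta. good a chi"
    and h1: "maps_into h1 eta chi"
    and h1c: "\<forall>d\<in>S_cof eta chi. acc_pt E d \<longrightarrow> (\<exists>C. club_in C d \<and> inj_on h1 C)"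
  shows "good eta chi"
proof -
  have infc: "infinite {..<chi}" using unc countable_finite by blast
  obtain p where p: "inj_on p ({..<chi} \<times> {..<chi})" "p ` ({..<chi} \<times> {..<chi}) \<subseteq> {..<chi}"
    using pairing[OF infc] by blast
  define nx where "nx x = (LEAST e. e \<in> E \<and> x \<le> e)" for x
  have nx: "nx x \<in> E \<and> x \<le> nx x" if xe: "x < eta" for x
  proof -
    obtain e where "e \<in> E" "x \<le> e" using club_unb[OF E xe] by blast
    then show ?thesis unfolding nx_def by (rule LeastI[of _ e, OF conjI])
  qed
  have nx_le: "nx x \<le> e" if "e \<in> E" "x \<le> e" for x e
    unfolding nx_def using that by (intro Least_le) simp
  define sc where "sc e = (SOME e'. e < e' \<and> e' < eta)" for e
  have sc: "e < sc e \<and> sc e < eta" if "e < eta" for e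
    unfolding sc_def by (rule someI_ex) (rule limit_above[OF leta that])
  define kk where "kk e = (SOME h. maps_into h (sc e) chi \<and>
      (\<forall>d\<in>S_cof (sc e) chi. \<exists>C. club_in C d \<and> inj_on h C))" for e
  have kk: "maps_into (kk e) (sc e) chi \<and> (\<forall>d\<in>S_cof (sc e) chi. \<exists>C. club_in C d \<and> inj_on (kk e) C)"
    if "e < eta" for e
  proof -
    have "good (sc e) chi" using below sc[OF that] by blast
    then show ?thesis unfolding kk_def good_def by (rule someI_ex)
  qed
  define h2 where "h2 x = kk (nx x) x" for x
  have h2: "maps_into h2 eta chi"
    unfolding maps_into_def
  proof
    fix y assume "y \<in> h2 ` {..<eta}"
    then obtain x where x: "x < eta" "y = h2 x" by blast
    have ne: "nx x < eta" using nx[OF x(1)] club_sub[OF E] by auto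
    have "x < sc (nx x)" using nx[OF x(1)] sc[OF ne] by (meson le_less_trans)
    then show "y \<in> {..<chi}" using kk[OF ne] x unfolding maps_into_def h2_def by auto
  qed
  have h2c: "\<exists>C. club_in C d \<and> inj_on h2 C" if dS: "d \<in> S_cof eta chi" and na: "\<not> acc_pt E d" for d
  proof -
    have de: "d < eta" using dS unfolding S_cof_def by blast
    have ld: "is_limit d" using S_cof_limit[OF unc reg dS] .
    obtain b where b: "b < d" "\<forall>x\<in>E. \<not> (b \<le> x \<and> x < d)"
      using na ld unfolding acc_pt_def by blast
    define e0 where "e0 = nx d"
    have e0: "e0 \<in> E" "d \<le> e0" "e0 < eta" using nx[OF de] club_sub[OF E] unfolding e0_def by auto
    have "d \<in> S_cof (sc e0) chi" using dS sc[OF e0(3)] e0(2) unfolding S_cof_def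
      by (auto intro: le_less_trans)
    then obtain C where C: "club_in C d" "inj_on (kk e0) C" using kk[OF e0(3)] by blast
    have C': "club_in (C \<inter> {b..}) d" using club_tail[OF C(1) b(1)] .
    have eq: "nx x = e0" if "x \<in> C \<inter> {b..}" for x
    proof -
      have xd: "x < d" "b \<le> x" using that club_sub[OF C(1)] by auto
      have xe: "x < eta" using xd de by simp
      have "nx x \<le> e0" using nx_le[OF e0(1)] xd e0(2) by simp
      moreover have "d \<le> nx x"
      proof (rule ccontr)
        assume "\<not> d \<le> nx x"
        then show False using b(2) nx[OF xe] xd by (meson not_le order_trans)
      qed
      then have "e0 \<le> nx x" unfolding e0_def using nx_le nx[OF xe] by blast
      ultimately show ?thesis by simp
    qed
    have "inj_on (kk e0) (C \<inter> {b..})" using C(2) by (rule inj_on_subset) auto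
    then have "inj_on h2 (C \<inter> {b..})" using eq unfolding h2_def by (simp add: inj_on_def)
    then show ?thesis using C' by blast
  qed
  have "maps_into (\<lambda>x. p (h1 x, h2 x)) eta chi" using combine(1)[OF p h1 h2] .
  moreover have "\<forall>d\<in>S_cof eta chi. \<exists>C. club_in C d \<and> inj_on (\<lambda>x. p (h1 x, h2 x)) C"
  proof
    fix d assume dS: "d \<in> S_cof eta chi"
    then obtain C where C: "club_in C d" "inj_on h1 C \<or> inj_on h2 C"
      using h1c h2c by blast
    have "C \<subseteq> {..<eta}" using club_sub[OF C(1)] dS unfolding S_cof_def by auto
    then show "\<exists>C. club_in C d \<and> inj_on (\<lambda>x. p (h1 x, h2 x)) C"
      using combine(2)[OF p h1 h2] C by blast
  qed
  ultimately show ?thesis unfolding good_def by blast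
qed

lemma good_succ:
  fixes chi :: "'a::wellorder"
  assumes unc: "uncountable {..<chi}" and reg: "regular_cardinal chi"
    and gb: "good b chi" and be: "b < eta" and nb: "\<forall>g. b < g \<longrightarrow> \<not> g < eta"
  shows "good eta chi"
proof -
  have infc: "infinite {..<chi}" using unc countable_finite by blast
  obtain p where p: "inj_on p ({..<chi} \<times> {..<chi})" "p ` ({..<chi} \<times> {..<chi}) \<subseteq> {..<chi}"
    using pairing[OF infc] by blast
  obtain h1 where h1: "maps_into h1 b chi" "\<forall>d\<in>S_cof b chi. \<exists>C. club_in C d \<and> inj_on h1 C"
    using gb unfolding good_def by blast
  have dle: "d \<le> b" if "d < eta" for d using nb that by (meson not_le)
  have h1': "maps_into (\<lambda>x. if x < b then h1 x else om) eta chi"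
    using h1(1) om_props(3)[OF unc] unfolding maps_into_def by auto
  have "\<exists>h2. maps_into h2 eta chi \<and> (cof b = chi \<longrightarrow> (\<exists>C. club_in C b \<and> inj_on h2 C))"
  proof (cases "cof b = chi")
    case True
    have lb: "is_limit b" using True limit_of_om[OF unc] om_props(3)[OF unc] by simp
    have lc: "is_limit chi" using reg_limit[OF reg] .
    obtain e where N: "normal_on e chi b"
      using normal_enum[OF True lc club_univ[OF lb]] by blast
    define R where "R = e ` {..<chi}"
    have R: "club_in R b" unfolding R_def using normal_image_club[OF N club_univ[OF lc]] .
    define h2 where "h2 x = (if x \<in> R then inv_into {..<chi} e x else om)" for x
    have "inv_into {..<chi} e x < chi" if "x \<in> R" for x
      using inv_into_into[of x e "{..<chi}"] that unfolding R_def by simp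
    then have "maps_into h2 eta chi"
      unfolding maps_into_def h2_def using om_props(3)[OF unc] by auto
    moreover have "inj_on h2 R"
    proof -
      have "inj_on (inv_into {..<chi} e) R" unfolding R_def by (rule inj_on_inv_into) simp
      then show ?thesis unfolding h2_def inj_on_def by auto
    qed
    ultimately show ?thesis using R by blast
  next
    case False
    have "maps_into (\<lambda>_. om) eta chi" using om_props(3)[OF unc] unfolding maps_into_def by auto
    then show ?thesis using False by blast
  qed
  then obtain h2 where h2: "maps_into h2 eta chi" "cof b = chi \<longrightarrow> (\<exists>C. club_in C b \<and> inj_on h2 C)"
    by blast
  let ?h1 = "\<lambda>x. if x < b then h1 x else om"
  have "maps_into (\<lambda>x. p (?h1 x, h2 x)) eta chi" using combine(1)[OF p h1' h2(1)] .
  moreover have "\<forall>d\<in>S_cof eta chi. \<exists>C. club_in C d \<and> inj_on (\<lambda>x. p (?h1 x, h2 x)) C"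
  proof
    fix d assume dS: "d \<in> S_cof eta chi"
    then have de: "d < eta" and cd: "cof d = chi" unfolding S_cof_def by auto
    have "\<exists>C. club_in C d \<and> (inj_on ?h1 C \<or> inj_on h2 C)"
    proof (cases "d = b")
      case True
      then show ?thesis using h2(2) cd by blast
    next
      case False
      then have "d < b" using dle[OF de] by simp
      then have "d \<in> S_cof b chi" using cd unfolding S_cof_def by simp
      then obtain C where C: "club_in C d" "inj_on h1 C" using h1(2) by blast
      have "C \<subseteq> {..<b}" using club_sub[OF C(1)] \<open>d < b\<close> by auto
      then have "inj_on ?h1 C" using C(2) unfolding inj_on_def by auto
      then show ?thesis using C(1) by blast
    qed
    then obtain C where C: "club_in C d" "inj_on ?h1 C \<or> inj_on h2 C" by blast
    have "C \<subseteq> {..<eta}" using club_sub[OF C(1)] de by auto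
    then show "\<exists>C. club_in C d \<and> inj_on (\<lambda>x. p (?h1 x, h2 x)) C"
      using combine(2)[OF p h1' h2(1)] C by blast
  qed
  ultimately show ?thesis unfolding good_def by blast
qed

lemma cof_limit:
  assumes ld: "is_limit d"
  shows "is_limit (cof d)"
proof -
  obtain f where f: "f ` {..<cof d} \<subseteq> {..<d}" "\<forall>b<d. \<exists>g<cof d. b \<le> f g"
    using cof_ex[of d] by blast
  show ?thesis
    unfolding is_limit_def
  proof (intro conjI allI impI)
    obtain b where "b < d" using ld unfolding is_limit_def by blast
    then show "\<exists>b. b < cof d" using f(2) by blast
  next
    fix a assume ak: "a < cof d"
    show "\<exists>g>a. g < cof d"
    proof (rule ccontr)
      assume "\<not> ?thesis"
      then have eq: "{..<cof d} = insert a {..<a}" using ak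
        by (auto simp: not_less) (meson le_less_trans not_less linorder_neqE)
      show False
      proof (cases "finite {..<a}")
        case True
        then have fin: "finite (f ` {..<cof d})" using eq by simp
        have ne: "f ` {..<cof d} \<noteq> {}" using ak by auto
        define m where "m = Max (f ` {..<cof d})"
        have "m \<in> f ` {..<cof d}" unfolding m_def using Max_in[OF fin ne] .
        then have "m < d" using f(1) by auto
        then obtain m' where m': "m < m'" "m' < d" using limit_above[OF ld] by blast
        then obtain g where g: "g < cof d" "m' \<le> f g" using f(2) by blast
        have "f g \<le> m" unfolding m_def using fin g(1) by (intro Max_ge) auto
        then show False using m' g by simp
      next
        case False
        then have "insert a {..<a} \<approx> {..<a}" by (rule infinite_insert_eqpoll)
        then obtain phi where phi: "bij_betw phi {..<a} {..<cof d}"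
          using eq eqpoll_sym unfolding eqpoll_def by metis
        have "cof d \<le> a"
        proof (rule cof_le[of "f \<circ> phi"])
          show "(f \<circ> phi) ` {..<a} \<subseteq> {..<d}" using phi f(1) unfolding bij_betw_def by auto
          show "\<forall>b<d. \<exists>g<a. b \<le> (f \<circ> phi) g"
          proof (intro allI impI)
            fix b assume "b < d"
            then obtain g where g: "g < cof d" "b \<le> f g" using f(2) by blast
            then obtain w where "w < a" "phi w = g" using phi unfolding bij_betw_def
              by (metis imageE lessThan_iff)
            then show "\<exists>g<a. b \<le> (f \<circ> phi) g" using g by auto
          qed
        qed
        then show False using ak by simp
      qed
    qed
  qed
qed

lemma acc_club:
  fixes chi :: "'a::wellorder"
  assumes unc: "uncountable {..<chi}" and oc: "(om::'a) < cof d" and E: "club_in E d"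
  shows "club_in {g. g < d \<and> acc_pt E g} d"
proof (rule club_intro)
  have lim: "is_limit d" using limit_of_om[OF unc oc] .
  show "{g. g < d \<and> acc_pt E g} \<subseteq> {..<d}" by auto
  show "g \<in> {g. g < d \<and> acc_pt E g}" if gd: "g < d" and ag: "acc_pt {g. g < d \<and> acc_pt E g} g" for g
  proof -
    have "acc_pt E g"
      unfolding acc_pt_def
    proof (intro conjI allI impI)
      show "is_limit g" using ag unfolding acc_pt_def by blast
      fix b assume "b < g"
      then obtain x where x: "x < d" "acc_pt E x" "b \<le> x" "x < g" using ag unfolding acc_pt_def by blast
      show "\<exists>y\<in>E. b \<le> y \<and> y < g"
      proof (cases "b < x")
        case True
        then obtain y where "y \<in> E" "b \<le> y" "y < x" using x(2) unfolding acc_pt_def by blast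
        then show ?thesis using x(4) by (meson less_trans)
      next
        case False
        then have "x = b" using x(3) by simp
        obtain c where "c < x" using x(2) unfolding acc_pt_def is_limit_def by blast
        then obtain y where "y \<in> E" "y < x" using x(2) unfolding acc_pt_def by blast
        then have "x \<in> E" using club_closed[OF E x(1) x(2)] by blast
        then show ?thesis using \<open>x = b\<close> x(4) by blast
      qed
    qed
    then show ?thesis using gd by blast
  qed
  fix b assume bd: "b < d"
  define x where "x n = rec_nat (above E b) (\<lambda>m y. above E y) n" for n
  have x0: "x 0 = above E b" by (simp add: x_def)
  have xS: "x (Suc m) = above E (x m)" for m by (simp add: x_def)
  have P: "x n < d \<and> x n \<in> E" for n
  proof (induction n)
    case 0 show ?case using above[OF E lim bd] x0 by simp
  next
    case (Suc m) then show ?case using above[OF E lim] xS[of m] by auto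
  qed
  have inc: "x m < x (Suc m)" for m using above(2)[OF E lim] xS[of m] P[of m] by auto
  obtain s where s: "s < d" "\<forall>n. x n < s" "is_limit s" "\<forall>b<s. \<exists>n. b < x n"
    using omega_sup[OF unc oc, of x] P inc by blast
  have "acc_pt E s"
    unfolding acc_pt_def
  proof (intro conjI allI impI)
    show "is_limit s" by (rule s(3))
    fix c assume "c < s"
    then obtain n where "c < x n" using s by blast
    then show "\<exists>y\<in>E. c \<le> y \<and> y < s" using P[of n] s(2) by (meson less_imp_le)
  qed
  moreover have "b \<le> s" using above(2)[OF E lim bd] x0 s(2)[rule_format, of 0] by simp
  ultimately show "\<exists>g\<in>{g. g < d \<and> acc_pt E g}. b \<le> g" using s(1) by blast
qed

context
  fixes chi :: "'a::wellorder"
  assumes unc: "uncountable {..<chi}" and reg: "regular_cardinal chi"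
begin

lemma theta_wr:
  assumes "\<exists>eta. weakly_reflective eta chi"
  shows "weakly_reflective (theta_star chi) chi"
  unfolding theta_star_def using assms by (rule LeastI_ex)

lemma good_below:
  assumes ex: "\<exists>eta. weakly_reflective eta chi" and a: "a < theta_star chi"
  shows "good a chi"
proof (cases "a \<le> chi")
  case True then show ?thesis using good_small[OF unc] by blast
next
  case False
  then have ca: "chi < a" by simp
  have "\<not> weakly_reflective a chi" using a unfolding theta_star_def by (rule not_less_Least)
  then have "strong_nonrefl a chi" using ca unfolding weakly_reflective_def by blast
  then show ?thesis using strong_iff_good[OF unc reg ca] by blast
qed

lemma theta_not_good:
  assumes ex: "\<exists>eta. weakly_reflective eta chi"
  shows "\<not> good (theta_star chi) chi"
proof
  assume g: "good (theta_star chi) chi"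
  have w: "weakly_reflective (theta_star chi) chi" using theta_wr[OF ex] .
  then have "chi < theta_star chi" unfolding weakly_reflective_def by blast
  then have "strong_nonrefl (theta_star chi) chi" using strong_iff_good[OF unc reg] g by blast
  then show False using w unfolding weakly_reflective_def by blast
qed

lemma part3:
  assumes ex: "\<exists>eta. weakly_reflective eta chi"
  shows "regular_cardinal (theta_star chi)"
proof (rule ccontr)
  assume nreg: "\<not> regular_cardinal (theta_star chi)"
  let ?T = "theta_star chi"
  have cT: "chi < ?T" using theta_wr[OF ex] unfolding weakly_reflective_def by blast
  have below: "\<forall>a<?T. good a chi" using good_below[OF ex] by blast
  have "good ?T chi"
  proof (cases "is_limit ?T")
    case False
    then obtain b where b: "b < ?T" "\<forall>g. b < g \<longrightarrow> \<not> g < ?T"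
      using cT unfolding is_limit_def by blast
    then show ?thesis using good_succ[OF unc reg below[rule_format, OF b(1)] b(1)] by blast
  next
    case True
    note lT = True
    define k where "k = cof ?T"
    have kT: "k < ?T"
    proof -
      have "k \<le> ?T" unfolding k_def by (rule cof_le_self)
      moreover have "k \<noteq> ?T"
      proof
        assume kT: "k = ?T"
        have "is_cardinal ?T"
          unfolding is_cardinal_def
        proof (intro allI impI notI)
          fix b assume bT: "b < ?T" and "\<exists>f. bij_betw f {..<b} {..<?T}"
          then obtain f where f: "bij_betw f {..<b} {..<?T}" by blast
          have "cof ?T \<le> b"
          proof (rule cof_le[of f])
            show "f ` {..<b} \<subseteq> {..<?T}" using f unfolding bij_betw_def by auto
            show "\<forall>c<?T. \<exists>g<b. c \<le> f g"
            proof (intro allI impI)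
              fix c assume "c < ?T"
              then obtain g where "g < b" "f g = c" using f unfolding bij_betw_def
                by (metis imageE lessThan_iff)
              then show "\<exists>g<b. c \<le> f g" by auto
            qed
          qed
          then show False using kT bT unfolding k_def by simp
        qed
        moreover have "infinite {..<?T}"
        proof
          assume "finite {..<?T}"
          moreover have "{..<chi} \<subseteq> {..<?T}" using cT by auto
          ultimately have "finite {..<chi}" by (rule finite_subset[rotated])
          then show False using unc countable_finite by blast
        qed
        ultimately show False using nreg kT unfolding regular_cardinal_def k_def by blast
      qed
      ultimately show ?thesis by simp
    qed
    have lk: "is_limit k" unfolding k_def using cof_limit[OF lT] .
    obtain e where N: "normal_on e k ?T"
      using normal_enum[OF k_def[symmetric] lk club_univ[OF lT]] by blast
    define R where "R = e ` {..<k}"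
    have R: "club_in R ?T" unfolding R_def using normal_image_club[OF N club_univ[OF lk]] .
    obtain kk where kk: "maps_into kk k chi" "\<forall>d\<in>S_cof k chi. \<exists>C. club_in C d \<and> inj_on kk C"
      using below kT unfolding good_def by blast
    define h1 where "h1 x = (if x \<in> R then kk (inv_into {..<k} e x) else om)" for x
    have inv_e: "inv_into {..<k} e (e j) = j" if "j < k" for j
    proof -
      have "inj_on e {..<k}" using normal_props(1)[OF N] by (rule strict_mono_on_imp_inj_on)
      then show ?thesis using that by simp
    qed
    have h1m: "maps_into h1 ?T chi"
    proof -
      have "kk (inv_into {..<k} e x) < chi" if "x \<in> R" for x
        using that kk(1) inv_e unfolding R_def maps_into_def by auto
      then show ?thesis unfolding maps_into_def h1_def using om_props(3)[OF unc] by auto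
    qed
    have h1c: "\<forall>d\<in>S_cof ?T chi. acc_pt R d \<longrightarrow> (\<exists>C. club_in C d \<and> inj_on h1 C)"
    proof (intro ballI impI)
      fix d assume dS: "d \<in> S_cof ?T chi" and ad: "acc_pt R d"
      have dT: "d < ?T" and cd: "cof d = chi" using dS unfolding S_cof_def by auto
      obtain J where J: "J < k" "is_limit J" "e J = d"
        using normal_limit_point[OF N _ dT ad[unfolded R_def]] by blast
      have "cof J = chi" using normal_cof[OF N J(1,2)] J(3) cd by simp
      then have "J \<in> S_cof k chi" using J(1) unfolding S_cof_def by simp
      then obtain C' where C': "club_in C' J" "inj_on kk C'" using kk(2) by blast
      have NJ: "normal_on e J (e J)" using normal_restrict[OF N J(1,2)] .
      have C: "club_in (e ` C') d" using normal_image_club[OF NJ C'(1)] J(3) by simp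
      have C'k: "\<And>j. j \<in> C' \<Longrightarrow> j < k" using club_sub[OF C'(1)] J(1) by (auto intro: less_trans)
      have "inj_on h1 (e ` C')"
      proof (rule inj_onI)
        fix x y assume xy: "x \<in> e ` C'" "y \<in> e ` C'" "h1 x = h1 y"
        then obtain a b where ab: "a \<in> C'" "b \<in> C'" "x = e a" "y = e b" by blast
        have "h1 x = kk a" "h1 y = kk b" using ab C'k inv_e unfolding h1_def R_def by auto
        then have "a = b" using C'(2) ab xy(3) unfolding inj_on_def by metis
        then show "x = y" using ab by simp
      qed
      then show "\<exists>C. club_in C d \<and> inj_on h1 C" using C by blast
    qed
    show ?thesis using glue[OF unc reg lT R below h1m h1c] .
  qed
  then show False using theta_not_good[OF ex] by blast
qed

lemma part4a:
  assumes ex: "\<exists>eta. weakly_reflective eta chi" and hm: "maps_into h (theta_star chi) chi"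
  shows "stationary_in (refl_set h (theta_star chi) chi) (theta_star chi)"
  unfolding stationary_in_def
proof (intro conjI allI impI)
  let ?T = "theta_star chi"
  show "refl_set h ?T chi \<subseteq> {..<?T}" unfolding refl_set_def S_cof_def by auto
  fix E assume E: "club_in E ?T"
  show "refl_set h ?T chi \<inter> E \<noteq> {}"
  proof
    assume dis: "refl_set h ?T chi \<inter> E = {}"
    have lT: "is_limit ?T" using reg_limit[OF part3[OF ex]] .
    have bel: "\<forall>a<?T. good a chi" using good_below[OF ex] by blast
    have "good ?T chi"
    proof (rule glue[OF unc reg lT E bel hm])
      show "\<forall>d\<in>S_cof ?T chi. acc_pt E d \<longrightarrow> (\<exists>C. club_in C d \<and> inj_on h C)"
      proof (intro ballI impI)
        fix d assume dS: "d \<in> S_cof ?T chi" and ad: "acc_pt E d"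
        have "d \<in> E" using club_closed[OF E _ ad] dS unfolding S_cof_def by blast
        then have "d \<notin> refl_set h ?T chi" using dis by blast
        then obtain C where "club_in C d" "strict_mono_on C h" using dS unfolding refl_set_def by blast
        then show "\<exists>C. club_in C d \<and> inj_on h C" using strict_mono_on_imp_inj_on by blast
      qed
    qed
    then show False using theta_not_good[OF ex] by blast
  qed
qed

lemma part4b:
  assumes ex: "\<exists>eta. weakly_reflective eta chi" and tc: "theta_star chi \<le> cof eta"
    and st: "stationary_in (S_cof eta (theta_star chi)) eta" and hm: "maps_into h eta chi"
  shows "stationary_in (refl_set h eta chi) eta"
  unfolding stationary_in_def
proof (intro conjI allI impI)
  let ?T = "theta_star chi"
  show "refl_set h eta chi \<subseteq> {..<eta}" unfolding refl_set_def S_cof_def by auto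
  fix E assume E: "club_in E eta"
  have cT: "chi < ?T" using theta_wr[OF ex] unfolding weakly_reflective_def by blast
  have ochi: "(om::'a) < chi" using om_props(3)[OF unc] .
  have oc: "(om::'a) < cof eta" using ochi cT tc by simp
  have A: "club_in {g. g < eta \<and> acc_pt E g} eta" using acc_club[OF unc oc E] .
  obtain gam where gam: "gam \<in> S_cof eta ?T" "gam < eta" "acc_pt E gam"
    using st A unfolding stationary_in_def by blast
  have cg: "cof gam = ?T" using gam(1) unfolding S_cof_def by blast
  have Eg: "club_in (E \<inter> {..<gam}) gam"
  proof (rule club_intro)
    show "E \<inter> {..<gam} \<subseteq> {..<gam}" by auto
    show "\<exists>g\<in>E \<inter> {..<gam}. b \<le> g" if "b < gam" for b
      using gam(3) that unfolding acc_pt_def by blast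
    show "g \<in> E \<inter> {..<gam}" if gg: "g < gam" and ag: "acc_pt (E \<inter> {..<gam}) g" for g
    proof -
      have "acc_pt E g" using ag unfolding acc_pt_def by blast
      then have "g \<in> E" using club_closed[OF E] gg gam(2) by (meson less_trans)
      then show ?thesis using gg by blast
    qed
  qed
  have regT: "regular_cardinal ?T" using part3[OF ex] .
  have lT: "is_limit ?T" using reg_limit[OF regT] .
  obtain e where N: "normal_on e ?T gam" and eE: "\<forall>j<?T. e j \<in> E \<inter> {..<gam}"
    using normal_enum[OF cg lT Eg] by blast
  have "e j < eta" if "j < ?T" for j using eE gam(2) that by (meson IntD2 lessThan_iff less_trans)
  then have hm': "maps_into (h \<circ> e) ?T chi"
    using hm unfolding maps_into_def by auto
  obtain i where i: "i \<in> refl_set (h \<circ> e) ?T chi" "i \<in> {..<?T}"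
    using part4a[OF ex hm'] club_univ[OF lT] unfolding stationary_in_def by blast
  have iS: "i \<in> S_cof ?T chi" and nC: "\<not> (\<exists>C. club_in C i \<and> strict_mono_on C (h \<circ> e))"
    using i(1) unfolding refl_set_def by auto
  have iT: "i < ?T" and ci: "cof i = chi" using iS unfolding S_cof_def by auto
  have li: "is_limit i" using S_cof_limit[OF unc reg iS] .
  have cei: "cof (e i) = chi" using normal_cof[OF N iT li] ci by simp
  have eiE: "e i \<in> E" "e i < gam" using eE iT by auto
  have eiS: "e i \<in> S_cof eta chi" using cei eiE gam(2) unfolding S_cof_def by (auto intro: less_trans)
  have "e i \<in> refl_set h eta chi"
    unfolding refl_set_def
  proof (intro CollectI conjI notI)
    show "e i \<in> S_cof eta chi" by (rule eiS)
    assume "\<exists>C. club_in C (e i) \<and> strict_mono_on C h"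
    then obtain C where C: "club_in C (e i)" "strict_mono_on C h" by blast
    have D: "club_in {j. j < i \<and> e j \<in> C} i"
      using normal_preimage_club[OF unc N iT li _ C(1)] cei ochi by simp
    have "strict_mono_on {j. j < i \<and> e j \<in> C} (h \<circ> e)"
      unfolding strict_mono_on_def
    proof (intro allI impI, elim conjE)
      fix a b assume a: "a \<in> {j. j < i \<and> e j \<in> C}" and b: "b \<in> {j. j < i \<and> e j \<in> C}" and ab: "a < b"
      have "e a < e b" using normal_less_iff(1)[OF N, of a b] a b ab iT by (auto intro: less_trans)
      then show "(h \<circ> e) a < (h \<circ> e) b" using C(2) a b unfolding strict_mono_on_def by auto
    qed
    then show False using nC D by blast
  qed
  then show "refl_set h eta chi \<inter> E \<noteq> {}" using eiE by blast
qed

lemma part1: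
  assumes w: "weakly_reflective eta chi" and ez: "eta < zeta"
  shows "weakly_reflective zeta chi"
  unfolding weakly_reflective_def
proof (intro conjI notI)
  show "chi < zeta" using w ez unfolding weakly_reflective_def by (meson less_trans)
  assume "strong_nonrefl zeta chi"
  then obtain h where h: "maps_into h zeta chi" "\<forall>d\<in>S_cof zeta chi. \<exists>C. club_in C d \<and> strict_mono_on C h"
    unfolding strong_nonrefl_def by blast
  have "maps_into h eta chi" using h(1) ez unfolding maps_into_def by (auto intro: less_trans)
  moreover have "S_cof eta chi \<subseteq> S_cof zeta chi" using ez unfolding S_cof_def by (auto intro: less_trans)
  ultimately have "strong_nonrefl eta chi" using h(2) w unfolding strong_nonrefl_def weakly_reflective_def by blast
  then show False using w unfolding weakly_reflective_def by blast
qed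

end

theorem mainTheorem2:
  fixes chi :: "'a::wellorder"
  assumes "regular_cardinal chi" and "uncountable {..<chi}"
  shows
   "(\<forall>eta zeta. weakly_reflective eta chi \<and> eta < zeta \<longrightarrow> weakly_reflective zeta chi)
    \<and> (\<forall>eta. chi < eta \<longrightarrow>
         (strong_nonrefl eta chi \<longleftrightarrow>
            (\<exists>h. maps_into h eta chi \<and>
               (\<forall>d\<in>S_cof eta chi. \<exists>C. club_in C d \<and> inj_on h C)))
         \<and> (\<forall>h. maps_into h eta chi \<longrightarrow>
              ((\<forall>d\<in>S_cof eta chi. \<exists>C. club_in C d \<and> strict_mono_on C h) \<longleftrightarrow>
               (\<forall>d\<in>S_cof eta chi. \<exists>C. club_in C d \<and> inj_on h C))))
    \<and> ((\<exists>eta. weakly_reflective eta chi) \<longrightarrow>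
         regular_cardinal (theta_star chi) \<and> chi < theta_star chi)
    \<and> (\<forall>zeta. weakly_reflective zeta chi \<longleftrightarrow>
         (\<exists>theta. regular_cardinal theta \<and> theta \<le> zeta \<and> weakly_reflective theta chi))
    \<and> ((\<exists>eta. weakly_reflective eta chi) \<longrightarrow>
         (\<forall>eta. (eta = theta_star chi \<or>
                 (theta_star chi \<le> cof eta \<and>
                  stationary_in (S_cof eta (theta_star chi)) eta)) \<longrightarrow>
            (\<forall>h. maps_into h eta chi \<longrightarrow> stationary_in (refl_set h eta chi) eta)))"
proof -
  note unc = assms(2) and reg = assms(1)
  have P1: "\<forall>eta zeta. weakly_reflective eta chi \<and> eta < zeta \<longrightarrow> weakly_reflective zeta chi"
    using part1[OF unc reg] by blast
  have P2: "\<forall>eta. chi < eta \<longrightarrow>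
         (strong_nonrefl eta chi \<longleftrightarrow>
            (\<exists>h. maps_into h eta chi \<and>
               (\<forall>d\<in>S_cof eta chi. \<exists>C. club_in C d \<and> inj_on h C)))
         \<and> (\<forall>h. maps_into h eta chi \<longrightarrow>
              ((\<forall>d\<in>S_cof eta chi. \<exists>C. club_in C d \<and> strict_mono_on C h) \<longleftrightarrow>
               (\<forall>d\<in>S_cof eta chi. \<exists>C. club_in C d \<and> inj_on h C)))"
    using strong_iff_good[OF unc reg] part2_equiv[OF unc reg] unfolding good_def by blast
  have P3: "(\<exists>eta. weakly_reflective eta chi) \<longrightarrow>
         regular_cardinal (theta_star chi) \<and> chi < theta_star chi"
  proof
    assume ex: "\<exists>eta. weakly_reflective eta chi"
    show "regular_cardinal (theta_star chi) \<and> chi < theta_star chi"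
      using part3[OF unc reg ex] theta_wr[OF unc reg ex] unfolding weakly_reflective_def by blast
  qed
  have P3b: "\<forall>zeta. weakly_reflective zeta chi \<longleftrightarrow>
         (\<exists>theta. regular_cardinal theta \<and> theta \<le> zeta \<and> weakly_reflective theta chi)"
  proof (intro allI iffI)
    fix zeta assume wz: "weakly_reflective zeta chi"
    then have ex: "\<exists>eta. weakly_reflective eta chi" by blast
    have "theta_star chi \<le> zeta" unfolding theta_star_def using wz by (rule Least_le)
    then show "\<exists>theta. regular_cardinal theta \<and> theta \<le> zeta \<and> weakly_reflective theta chi"
      using part3[OF unc reg ex] theta_wr[OF unc reg ex] by blast
  next
    fix zeta assume "\<exists>theta. regular_cardinal theta \<and> theta \<le> zeta \<and> weakly_reflective theta chi"
    then obtain theta where "theta \<le> zeta" "weakly_reflective theta chi" by blast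
    then show "weakly_reflective zeta chi" using part1[OF unc reg] by (cases "theta = zeta") auto
  qed
  have P4: "(\<exists>eta. weakly_reflective eta chi) \<longrightarrow>
         (\<forall>eta. (eta = theta_star chi \<or>
                 (theta_star chi \<le> cof eta \<and>
                  stationary_in (S_cof eta (theta_star chi)) eta)) \<longrightarrow>
            (\<forall>h. maps_into h eta chi \<longrightarrow> stationary_in (refl_set h eta chi) eta))"
    using part4a[OF unc reg] part4b[OF unc reg] by blast
  show ?thesis using P1 P2 P3 P3b P4 by blast
qed

end
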